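(* Let $\Gamma_1=(V_1,E_1)$ be a graph and let $\Gamma_2=(V_2,E_2)$ be a $\delta$-regular graph. A set $S\subseteq V_1$ is a global offensive $k$-alliance in $\Gamma_1$ if and only if $S\times V_2$ is a global offensive $(k-\delta)$-alliance in $\Gamma_1\times\Gamma_2$.
   Context: Graphs are finite and simple. In a graph $G=(V,E)$, for $S\subseteq V$ and $v\in V$, $\delta_S(v)$ is the number of neighbours of $v$ in $S$, $\overline{S}=V\setminus S$, and $\partial(S)$ the set of vertices of $\overline{S}$ with a neighbour in $S$. A nonempty $S$ is an offensive $k$-alliance in $G$ if $\delta_S(v)\ge\delta_{\overline{S}}(v)+k$ for every $v\in\partial(S)$, and a global offensive $k$-alliance if moreover it is dominating. The Cartesian product $\Gamma_1\times\Gamma_2$ has vertex set $V_1\times V_2$, with $(u,v)\sim(u',v')$ iff either $u=u'$ and $v\sim v'$, or $v=v'$ and $u\sim u'$. *)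

theory Defs
  imports Main
begin

definition simple_graph :: "'a set \<Rightarrow> ('a \<Rightarrow> 'a \<Rightarrow> bool) \<Rightarrow> bool" where
  "simple_graph V E \<longleftrightarrow> finite V \<and> (\<forall>x y. E x y \<longrightarrow> x \<in> V \<and> y \<in> V)
     \<and> (\<forall>x y. E x y \<longrightarrow> E y x) \<and> (\<forall>x. \<not> E x x)"

definition deg_in :: "('a \<Rightarrow> 'a \<Rightarrow> bool) \<Rightarrow> 'a set \<Rightarrow> 'a \<Rightarrow> nat" where
  "deg_in E S v = card {u \<in> S. E v u}"

definition regular :: "'a set \<Rightarrow> ('a \<Rightarrow> 'a \<Rightarrow> bool) \<Rightarrow> nat \<Rightarrow> bool" where
  "regular V E d \<longleftrightarrow> (\<forall>v\<in>V. deg_in E V v = d)"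

definition boundary :: "'a set \<Rightarrow> ('a \<Rightarrow> 'a \<Rightarrow> bool) \<Rightarrow> 'a set \<Rightarrow> 'a set" where
  "boundary V E S = {v \<in> V - S. \<exists>u\<in>S. E v u}"

definition offensive_alliance :: "'a set \<Rightarrow> ('a \<Rightarrow> 'a \<Rightarrow> bool) \<Rightarrow> int \<Rightarrow> 'a set \<Rightarrow> bool" where
  "offensive_alliance V E k S \<longleftrightarrow> S \<noteq> {} \<and> S \<subseteq> V \<and>
     (\<forall>v \<in> boundary V E S. int (deg_in E S v) \<ge> int (deg_in E (V - S) v) + k)"

definition dominating :: "'a set \<Rightarrow> ('a \<Rightarrow> 'a \<Rightarrow> bool) \<Rightarrow> 'a set \<Rightarrow> bool" where
  "dominating V E S \<longleftrightarrow> S \<subseteq> V \<and> (\<forall>v \<in> V - S. \<exists>u\<in>S. E v u)"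

definition global_offensive_alliance :: "'a set \<Rightarrow> ('a \<Rightarrow> 'a \<Rightarrow> bool) \<Rightarrow> int \<Rightarrow> 'a set \<Rightarrow> bool" where
  "global_offensive_alliance V E k S \<longleftrightarrow> offensive_alliance V E k S \<and> dominating V E S"

definition cart_edge :: "('a \<Rightarrow> 'a \<Rightarrow> bool) \<Rightarrow> ('b \<Rightarrow> 'b \<Rightarrow> bool) \<Rightarrow> 'a \<times> 'b \<Rightarrow> 'a \<times> 'b \<Rightarrow> bool" where
  "cart_edge E1 E2 p q \<longleftrightarrow> (fst p = fst q \<and> E2 (snd p) (snd q)) \<or> (snd p = snd q \<and> E1 (fst p) (fst q))"

end

theory Submission
  imports Defs
begin

lemma degS:
  assumes "v \<notin> S"
  shows "deg_in (cart_edge E1 E2) (S \<times> V2) (v,w) = (if w \<in> V2 then deg_in E1 S v else 0)"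
proof -
  have "{u \<in> S \<times> V2. cart_edge E1 E2 (v,w) u} = (if w \<in> V2 then (\<lambda>x. (x,w)) ` {x \<in> S. E1 v x} else {})"
    using assms by (auto simp: cart_edge_def)
  moreover have "inj (\<lambda>x. (x,w))" by (auto simp: inj_def)
  ultimately show ?thesis unfolding deg_in_def by (simp add: card_image inj_on_def)
qed

lemma degO:
  assumes g1: "simple_graph V1 E1" and g2: "simple_graph V2 E2" and r: "regular V2 E2 d"
    and v: "v \<in> V1 - S" and w: "w \<in> V2"
  shows "deg_in (cart_edge E1 E2) (V1 \<times> V2 - S \<times> V2) (v,w) = deg_in E1 (V1 - S) v + d"
proof -
  let ?A = "(\<lambda>x. (x,w)) ` {x \<in> V1 - S. E1 v x}"
  let ?B = "Pair v ` {y \<in> V2. E2 w y}"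
  have eq: "{u \<in> V1 \<times> V2 - S \<times> V2. cart_edge E1 E2 (v,w) u} = ?A \<union> ?B"
    using v w by (auto simp: cart_edge_def)
  have f1: "finite V1" "finite V2" using g1 g2 by (auto simp: simple_graph_def)
  have irr: "\<not> E1 v v" "\<not> E2 w w" using g1 g2 by (auto simp: simple_graph_def)
  have disj: "?A \<inter> ?B = {}" using irr by auto
  have fA: "finite ?A" "finite ?B" using f1 by auto
  have cA: "card ?A = deg_in E1 (V1 - S) v" unfolding deg_in_def
    by (rule card_image) (auto simp: inj_on_def)
  have cB: "card ?B = d" using r w unfolding regular_def deg_in_def
    by (subst card_image) (auto simp: inj_on_def)
  show ?thesis unfolding deg_in_def[of "cart_edge E1 E2"] eq
    using card_Un_disjoint[OF fA disj] cA cB by simp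
qed

theorem mainTheorem15:
  fixes V1 :: "'a set" and E1 :: "'a \<Rightarrow> 'a \<Rightarrow> bool"
    and V2 :: "'b set" and E2 :: "'b \<Rightarrow> 'b \<Rightarrow> bool"
    and \<delta> :: nat and k :: int and S :: "'a set"
  assumes "simple_graph V1 E1" and "simple_graph V2 E2"
    and "V1 \<noteq> {}" and "V2 \<noteq> {}"
    and "regular V2 E2 \<delta>"
    and "S \<subseteq> V1"
  shows "global_offensive_alliance V1 E1 k S \<longleftrightarrow>
         global_offensive_alliance (V1 \<times> V2) (cart_edge E1 E2) (k - int \<delta>) (S \<times> V2)"
proof -
  have ed1: "\<And>x y. E1 x y \<Longrightarrow> x \<in> V1 \<and> y \<in> V1" and ed2: "\<And>x y. E2 x y \<Longrightarrow> x \<in> V2 \<and> y \<in> V2"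
    using assms(1,2) by (auto simp: simple_graph_def)
  have bd: "boundary (V1 \<times> V2) (cart_edge E1 E2) (S \<times> V2) = boundary V1 E1 S \<times> V2"
    using ed1 ed2 by (auto simp: boundary_def cart_edge_def; blast)
  have dom: "dominating (V1 \<times> V2) (cart_edge E1 E2) (S \<times> V2) \<longleftrightarrow> dominating V1 E1 S"
  proof
    assume d: "dominating (V1 \<times> V2) (cart_edge E1 E2) (S \<times> V2)"
    obtain w where w: "w \<in> V2" using assms(4) by auto
    show "dominating V1 E1 S" unfolding dominating_def
    proof (intro conjI ballI)
      fix v assume v: "v \<in> V1 - S"
      then obtain u where "u \<in> S \<times> V2" "cart_edge E1 E2 (v,w) u"
      proof -
        have "(v,w) \<in> V1 \<times> V2 - S \<times> V2" using v w by auto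
        then show ?thesis using d that unfolding dominating_def by blast
      qed
      then show "\<exists>u\<in>S. E1 v u" using v by (auto simp: cart_edge_def)
    qed (use assms(6) in auto)
  next
    assume "dominating V1 E1 S"
    then show "dominating (V1 \<times> V2) (cart_edge E1 E2) (S \<times> V2)"
      unfolding dominating_def cart_edge_def by fastforce
  qed
  have ne: "S \<times> V2 \<noteq> {} \<longleftrightarrow> S \<noteq> {}" using assms(4) by auto
  have cond: "(\<forall>p \<in> boundary V1 E1 S \<times> V2.
      int (deg_in (cart_edge E1 E2) (S \<times> V2) p) \<ge> int (deg_in (cart_edge E1 E2) (V1 \<times> V2 - S \<times> V2) p) + (k - int \<delta>))
    \<longleftrightarrow> (\<forall>v \<in> boundary V1 E1 S. int (deg_in E1 S v) \<ge> int (deg_in E1 (V1 - S) v) + k)"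
  proof -
    have "\<And>v w. v \<in> boundary V1 E1 S \<Longrightarrow> w \<in> V2 \<Longrightarrow>
      (int (deg_in (cart_edge E1 E2) (S \<times> V2) (v,w)) \<ge> int (deg_in (cart_edge E1 E2) (V1 \<times> V2 - S \<times> V2) (v,w)) + (k - int \<delta>))
      \<longleftrightarrow> int (deg_in E1 S v) \<ge> int (deg_in E1 (V1 - S) v) + k"
    proof -
      fix v w assume v: "v \<in> boundary V1 E1 S" and w: "w \<in> V2"
      have v': "v \<in> V1 - S" using v by (auto simp: boundary_def)
      show "?thesis v w"
        using degS[of v S E1 E2 V2 w] degO[OF assms(1,2,5) v' w] v' w by simp
    qed
    then show ?thesis using assms(4) by blast
  qed
  show ?thesis
    unfolding global_offensive_alliance_def offensive_alliance_def bd dom ne cond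
    using assms(6) by auto
qed

end
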